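(* Let $n$ and $m$ be integers with $n\ge 1$ and $0\le m\le n$, and let $\theta>0$ be real. Then $$T'_{n+1,m+1}(\theta)=\frac{\theta^{m}}{(\theta+1)_n}\,\frac{1}{2\pi i}\int_{\mathcal C_R}\frac{(z+1)_n}{z^{m}}\,\frac{dz}{\theta-z},$$ for every $R$ with $0<R<\theta$, where $\mathcal C_R$ is the circle $|z|=R$ in the complex plane, traversed once counterclockwise.
   Context: For a complex number $\alpha$ and an integer $n\ge0$, the Pochhammer symbol is $(\alpha)_0=1$, $(\alpha)_n=\alpha(\alpha+1)\cdots(\alpha+n-1)$. The Stirling numbers of the first kind $S_n^{(k)}$ ($0\le k\le n$) are defined by the polynomial identity $(\theta)_n=\sum_{k=0}^n(-1)^{n-k}S_n^{(k)}\theta^k$. For integers $0\le m\le n$ and real $\theta>0$, define $$S'_{n,m}(\theta)=\frac{1}{(\theta)_n}\sum_{k=m}^n(-1)^{n-k}S_n^{(k)}\theta^k,\qquad T'_{n,m}(\theta)=1-S'_{n,m}(\theta)=\frac{1}{(\theta)_n}\sum_{k=0}^{m-1}(-1)^{n-k}S_n^{(k)}\theta^k .$$ *)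

theory Defs
  imports "HOL-Complex_Analysis.Complex_Analysis" "HOL-Combinatorics.Stirling"
begin

text \<open>Signed Stirling numbers of the first kind S_n^(k), characterised by
  (theta)_n = sum_k (-1)^(n-k) S_n^(k) theta^k; the library's stirling n k is the
  unsigned version, so S_n^(k) = (-1)^(n-k) * stirling n k.\<close>
definition stirling1_signed :: "nat \<Rightarrow> nat \<Rightarrow> real" where
  "stirling1_signed n k = (-1) ^ (n - k) * real (stirling n k)"

definition S' :: "nat \<Rightarrow> nat \<Rightarrow> real \<Rightarrow> real" where
  "S' n m \<theta> = (1 / pochhammer \<theta> n) *
     (\<Sum>k=m..n. (-1) ^ (n - k) * stirling1_signed n k * \<theta> ^ k)"

definition T' :: "nat \<Rightarrow> nat \<Rightarrow> real \<Rightarrow> real" where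
  "T' n m \<theta> = (1 / pochhammer \<theta> n) *
     (\<Sum>k=0..<m. (-1) ^ (n - k) * stirling1_signed n k * \<theta> ^ k)"

end

theory Submission
  imports Defs
begin

lemma deriv_const_iter: "(deriv ^^ k) (\<lambda>_. 1::complex) = (if k = 0 then (\<lambda>_. 1) else (\<lambda>_. 0))"
proof (induction k)
  case 0 then show ?case by simp
next
  case (Suc k) then show ?case by (cases "k = 0") auto
qed

lemma mono_int:
  assumes R: "R > 0"
  shows "((\<lambda>z::complex. z ^ j / z ^ Suc i) has_contour_integral (if j = i then 2 * pi * \<i> else 0)) (circlepath 0 R)"
proof (cases "j \<le> i")
  case True
  have "((\<lambda>u. (\<lambda>_. 1::complex) u / (u - 0) ^ Suc (i - j)) has_contour_integral
        (2 * pi * \<i>) / fact (i - j) * (deriv ^^ (i - j)) (\<lambda>_. 1) 0) (circlepath 0 R)"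
    by (rule Cauchy_has_contour_integral_higher_derivative_circlepath) (use R in auto)
  also have "(2 * pi * \<i>) / fact (i - j) * (deriv ^^ (i - j)) (\<lambda>_. 1::complex) 0 = (if j = i then 2 * pi * \<i> else 0)"
    using True by (auto simp: deriv_const_iter)
  finally have *: "((\<lambda>u. 1 / u ^ Suc (i - j)) has_contour_integral (if j = i then 2 * pi * \<i> else 0)) (circlepath 0 R)"
    by simp
  show ?thesis
  proof (rule has_contour_integral_eq[OF *])
    fix x :: complex assume "x \<in> path_image (circlepath 0 R)"
    then have "x \<noteq> 0" using R by auto
    have "x ^ Suc i = x ^ j * x ^ Suc (i - j)" using True
      by (simp flip: power_add add: Suc_diff_le)
    then show "1 / x ^ Suc (i - j) = x ^ j / x ^ Suc i" using \<open>x \<noteq> 0\<close> by simp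
  qed
next
  case False
  have *: "((\<lambda>u::complex. u ^ (j - Suc i)) has_contour_integral 0) (circlepath 0 R)"
    by (rule Cauchy_theorem_disc_simple[of _ 0 "R+1"]) (use R in \<open>auto intro!: holomorphic_intros\<close>)
  show ?thesis
  proof -
    have "((\<lambda>z::complex. z ^ j / z ^ Suc i) has_contour_integral 0) (circlepath 0 R)"
    proof (rule has_contour_integral_eq[OF *])
      fix x :: complex assume "x \<in> path_image (circlepath 0 R)"
      then have "x \<noteq> 0" using R by auto
      have jj: "j = (j - Suc i) + Suc i" using False by simp
      have "x ^ j = x ^ (j - Suc i) * x ^ Suc i" by (subst jj) (simp only: power_add)
      then show "x ^ (j - Suc i) = x ^ j / x ^ Suc i" using \<open>x \<noteq> 0\<close> by simp
    qed
    then show ?thesis using False by simp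
  qed
qed

lemma geom_split:
  fixes z t :: complex
  assumes "z \<noteq> 0" "t \<noteq> z"
  shows "(\<Sum>i<m. t ^ i / z ^ Suc i) = t ^ m / (z ^ m * (t - z)) - 1 / (t - z)"
proof (induction m)
  case 0 then show ?case by simp
next
  case (Suc m)
  have nz: "t - z \<noteq> 0" "z ^ m \<noteq> 0" "z \<noteq> 0" using assms by auto
  have "(\<Sum>i<Suc m. t ^ i / z ^ Suc i) = (\<Sum>i<m. t ^ i / z ^ Suc i) + t ^ m / z ^ Suc m"
    by (rule sum.lessThan_Suc)
  also have "\<dots> = t ^ m / (z ^ m * (t - z)) - 1 / (t - z) + t ^ m / z ^ Suc m"
    by (simp only: Suc.IH)
  also have "t ^ m / (z ^ m * (t - z)) + t ^ m / z ^ Suc m = t ^ Suc m / (z ^ Suc m * (t - z))"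
    using nz by (simp add: field_split_simps)
  then have "t ^ m / (z ^ m * (t - z)) - 1 / (t - z) + t ^ m / z ^ Suc m = t ^ Suc m / (z ^ Suc m * (t - z)) - 1 / (t - z)"
    by (simp add: algebra_simps)
  finally show ?case .
qed

lemma poch_expand:
  fixes z :: "'a::field"
  assumes "z \<noteq> 0"
  shows "pochhammer (z + 1) n = (\<Sum>j\<le>n. of_nat (stirling (n+1) (j+1)) * z ^ j)"
proof -
  have "z * pochhammer (z + 1) n = pochhammer z (Suc n)" by (simp only: pochhammer_rec)
  also have "\<dots> = (\<Sum>k\<le>Suc n. of_nat (stirling (Suc n) k) * z ^ k)" by (rule stirling_pochhammer[symmetric])
  also have "\<dots> = (\<Sum>j\<le>n. of_nat (stirling (Suc n) (Suc j)) * z ^ Suc j)"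
    by (subst sum.atMost_Suc_shift) simp
  also have "\<dots> = z * (\<Sum>j\<le>n. of_nat (stirling (n+1) (j+1)) * z ^ j)"
    by (simp add: sum_distrib_left mult.assoc mult.left_commute)
  finally show ?thesis using assms by simp
qed

lemma T'_eq:
  fixes \<theta> :: real
  assumes "\<theta> > 0"
  shows "T' (n + 1) (m + 1) \<theta> =
     (\<Sum>i<m. real (stirling (n+1) (i+1)) * \<theta> ^ i) / pochhammer (\<theta> + 1) n"
proof -
  have h: "(-1::real) ^ a * ((-1) ^ a * x) = x" for a x
    by (simp add: mult.assoc[symmetric] flip: power_add)
  have "(\<Sum>k=0..<m+1. (-1) ^ (n + 1 - k) * stirling1_signed (n + 1) k * \<theta> ^ k)
      = (\<Sum>k<Suc m. real (stirling (Suc n) k) * \<theta> ^ k)"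
    by (simp add: stirling1_signed_def h atLeast0LessThan)
  also have "\<dots> = \<theta> * (\<Sum>i<m. real (stirling (n+1) (i+1)) * \<theta> ^ i)"
    by (subst sum.lessThan_Suc_shift) (simp add: sum_distrib_left algebra_simps)
  finally have S: "(\<Sum>k=0..<m+1. (-1) ^ (n + 1 - k) * stirling1_signed (n + 1) k * \<theta> ^ k)
      = \<theta> * (\<Sum>i<m. real (stirling (n+1) (i+1)) * \<theta> ^ i)" .
  have P: "pochhammer \<theta> (n + 1) = \<theta> * pochhammer (\<theta> + 1) n"
    by (simp add: pochhammer_rec)
  have "pochhammer (\<theta> + 1) n > 0" using assms by (intro pochhammer_pos) simp
  then show ?thesis unfolding T'_def S P using assms by (simp add: field_simps)
qed

theorem corollary1:
  fixes n m :: nat and \<theta> R :: real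
  assumes "n \<ge> 1" and "m \<le> n" and "\<theta> > 0" and "0 < R" and "R < \<theta>"
  shows "complex_of_real (T' (n + 1) (m + 1) \<theta>) =
    complex_of_real (\<theta> ^ m / pochhammer (\<theta> + 1) n) *
    (1 / (2 * pi * \<i>)) *
    contour_integral (circlepath 0 R)
      (\<lambda>z. pochhammer (z + 1) n / z ^ m * (1 / (complex_of_real \<theta> - z)))"
proof -
  define c where "c i = (of_nat (stirling (n+1) (i+1)) :: complex)" for i
  define t where "t = complex_of_real \<theta>"
  define A where "A = (\<Sum>i<m. c i * t ^ i)"
  have tnz: "t \<noteq> 0" using assms by (simp add: t_def)
  define h where "h z = pochhammer (z + 1) n / (t - z) + (\<Sum>i<m. t ^ i * (\<Sum>j\<le>n. c j * (z ^ j / z ^ Suc i)))" for z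
  have I1: "((\<lambda>z. pochhammer (z + 1) n / (t - z)) has_contour_integral 0) (circlepath 0 R)"
  proof (rule Cauchy_theorem_disc_simple[of _ 0 \<theta>])
    show "(\<lambda>z. pochhammer (z + 1) n / (t - z)) holomorphic_on ball 0 \<theta>"
    proof (intro holomorphic_intros)
      fix z :: complex assume "z \<in> ball 0 \<theta>"
      then have "norm z < \<theta>" by simp
      then show "t - z \<noteq> 0" by (auto simp: t_def)
    qed
  qed (use assms in auto)
  have I2: "((\<lambda>z. \<Sum>i<m. t ^ i * (\<Sum>j\<le>n. c j * (z ^ j / z ^ Suc i))) has_contour_integral
        (\<Sum>i<m. t ^ i * (\<Sum>j\<le>n. c j * (if j = i then 2 * pi * \<i> else 0)))) (circlepath 0 R)"
    by (intro has_contour_integral_sum has_contour_integral_lmul mono_int) (use assms in auto)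
  have "(\<Sum>i<m. t ^ i * (\<Sum>j\<le>n. c j * (if j = i then 2 * pi * \<i> else 0))) = (\<Sum>i<m. t ^ i * (c i * (2 * pi * \<i>)))"
  proof (rule sum.cong)
    fix i assume "i \<in> {..<m}"
    then have "i \<in> {..n}" using assms by auto
    then show "t ^ i * (\<Sum>j\<le>n. c j * (if j = i then 2 * pi * \<i> else 0)) = t ^ i * (c i * (2 * pi * \<i>))"
      by (simp add: if_distrib cong: if_cong)
  qed simp
  also have "\<dots> = 2 * pi * \<i> * A" by (simp add: A_def sum_distrib_left algebra_simps)
  finally have I2': "((\<lambda>z. \<Sum>i<m. t ^ i * (\<Sum>j\<le>n. c j * (z ^ j / z ^ Suc i))) has_contour_integral
        (2 * pi * \<i> * A)) (circlepath 0 R)" using I2 by simp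
  have Ih: "(h has_contour_integral (2 * pi * \<i> * A)) (circlepath 0 R)"
    unfolding h_def using has_contour_integral_add[OF I1 I2'] by simp
  have Ig: "((\<lambda>z. pochhammer (z + 1) n / z ^ m * (1 / (t - z))) has_contour_integral (2 * pi * \<i> * A / t ^ m)) (circlepath 0 R)"
  proof (rule has_contour_integral_eq[OF has_contour_integral_div[OF Ih]])
    fix z assume "z \<in> path_image (circlepath 0 R)"
    then have nz: "norm z = R" using assms by auto
    then have znz: "z \<noteq> 0" using assms by auto
    have tz: "t \<noteq> z" using nz assms by (auto simp: t_def)
    have "(\<Sum>i<m. t ^ i * (\<Sum>j\<le>n. c j * (z ^ j / z ^ Suc i)))
        = (\<Sum>i<m. t ^ i * (pochhammer (z + 1) n / z ^ Suc i))"
      by (simp add: poch_expand[OF znz] c_def sum_divide_distrib)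
    also have "\<dots> = pochhammer (z + 1) n * (\<Sum>i<m. t ^ i / z ^ Suc i)"
      by (simp add: sum_distrib_left algebra_simps)
    also have "\<dots> = pochhammer (z + 1) n * (t ^ m / (z ^ m * (t - z)) - 1 / (t - z))"
      using geom_split[OF znz tz] by simp
    finally have "h z = pochhammer (z + 1) n / (t - z) + pochhammer (z + 1) n * (t ^ m / (z ^ m * (t - z)) - 1 / (t - z))"
      by (simp add: h_def)
    also have "pochhammer (z + 1) n / (t - z) + pochhammer (z + 1) n * (t ^ m / (z ^ m * (t - z)) - 1 / (t - z))
        = pochhammer (z + 1) n * (t ^ m / (z ^ m * (t - z)))"
      by (simp add: algebra_simps)
    finally have hz: "h z = pochhammer (z + 1) n * (t ^ m / (z ^ m * (t - z)))" .
    have nz3: "t ^ m \<noteq> 0" "z ^ m \<noteq> 0" "t - z \<noteq> 0" using tnz znz tz by auto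
    show "h z / t ^ m = pochhammer (z + 1) n / z ^ m * (1 / (t - z))"
      unfolding hz using nz3 by (simp add: field_simps)
  qed
  have CI: "contour_integral (circlepath 0 R) (\<lambda>z. pochhammer (z + 1) n / z ^ m * (1 / (complex_of_real \<theta> - z)))
      = 2 * pi * \<i> * A / t ^ m"
    using contour_integral_unique[OF Ig] by (simp add: t_def)
  have Aeq: "A = complex_of_real (\<Sum>i<m. real (stirling (n+1) (i+1)) * \<theta> ^ i)"
    by (simp add: A_def c_def t_def)
  have Ppos: "pochhammer (\<theta> + 1) n > 0" using assms by (intro pochhammer_pos) simp
  show ?thesis
    unfolding CI T'_eq[OF assms(3)] Aeq using tnz Ppos
    by (simp add: t_def field_simps)
qed

end
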